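(* Let $i\in\{1,2\}$, let $(X,e_X,\mu_X)$ be an $\mathrm{NP}_i$-digital H-space, and let $(Y,e_Y)$ be a pointed digital image such that there are pointed continuous maps $f:(X,e_X)\to(Y,e_Y)$ and $g:(Y,e_Y)\to(X,e_X)$ with $g\circ f\simeq_i\mathrm{id}_X$ and $f\circ g\simeq_i\mathrm{id}_Y$. Define $\mu_Y=f\circ\mu_X\circ(g\times g):Y\times Y\to Y$. Then $(Y,e_Y,\mu_Y)$ is an $\mathrm{NP}_i$-digital H-space, and $(X,e_X,\mu_X)$ and $(Y,e_Y,\mu_Y)$ are H-equivalent (via $f$ and $g$).
   Context: A digital image is a finite set $X\subset\mathbb{Z}^n$ with a reflexive symmetric adjacency relation (a finite reflexive graph); continuous maps send adjacent points to adjacent points. On products, $\mathrm{NP}_u$ declares two tuples adjacent iff coordinates are adjacent in at most $u$ positions and equal elsewhere. An $\mathrm{NP}_i$-homotopy from $f$ to $g:X\to Y$ is an $\mathrm{NP}_i$-continuous $H:X\times[0,m]_{\mathbb{Z}}\to Y$ with $H(\cdot,0)=f$, $H(\cdot,m)=g$; write $f\simeq_i g$ (when $X$ is itself a product it carries the $\mathrm{NP}_i$ adjacency). $(f,g)(x)=(f(x),g(x))$, $(f\times g)(x,y)=(f(x),g(y))$; $c_e$ is the constant map at $e$. Pointed map: sends base point to base point. An $\mathrm{NP}_i$-digital H-space is $(X,e,\mu)$ with $\mu:X\times X\to X$ $\mathrm{NP}_i$-continuous, $\mu\circ(\mathrm{id}_X,c_e)\simeq_i\mathrm{id}_X$ and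 $\mu\circ(c_e,\mathrm{id}_X)\simeq_i\mathrm{id}_X$ (homotopies need not be pointed). Two $\mathrm{NP}_i$-digital H-spaces $(X,e_X,\mu_X)$, $(Y,e_Y,\mu_Y)$ are H-equivalent if there are continuous pointed maps $f:(X,e_X)\to(Y,e_Y)$, $g:(Y,e_Y)\to(X,e_X)$ with $f\circ g\simeq_i\mathrm{id}_Y$, $g\circ f\simeq_i\mathrm{id}_X$, $f\circ\mu_X\simeq_i\mu_Y\circ(f\times f)$ and $g\circ\mu_Y\simeq_i\mu_X\circ(g\times g)$. *)

theory Defs
  imports Main
begin

definition digital_image :: "'a set \<Rightarrow> ('a \<Rightarrow> 'a \<Rightarrow> bool) \<Rightarrow> bool" where
  "digital_image X adj \<longleftrightarrow> finite X \<and> (\<forall>x\<in>X. adj x x)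
     \<and> (\<forall>x\<in>X. \<forall>y\<in>X. adj x y \<longrightarrow> adj y x)"

definition dcontinuous :: "'a set \<Rightarrow> ('a \<Rightarrow> 'a \<Rightarrow> bool) \<Rightarrow> 'b set \<Rightarrow> ('b \<Rightarrow> 'b \<Rightarrow> bool)
    \<Rightarrow> ('a \<Rightarrow> 'b) \<Rightarrow> bool" where
  "dcontinuous X a Y b f \<longleftrightarrow> (\<forall>x\<in>X. f x \<in> Y)
     \<and> (\<forall>x\<in>X. \<forall>x'\<in>X. a x x' \<longrightarrow> b (f x) (f x'))"

definition NP_adj :: "nat \<Rightarrow> ('a \<Rightarrow> 'a \<Rightarrow> bool) \<Rightarrow> ('b \<Rightarrow> 'b \<Rightarrow> bool)
    \<Rightarrow> 'a \<times> 'b \<Rightarrow> 'a \<times> 'b \<Rightarrow> bool" where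
  "NP_adj u a b p q \<longleftrightarrow> (fst p = fst q \<or> a (fst p) (fst q)) \<and> (snd p = snd q \<or> b (snd p) (snd q))
     \<and> (if fst p = fst q then 0 else 1) + (if snd p = snd q then 0 else 1) \<le> (u::nat)"

definition int_adj :: "int \<Rightarrow> int \<Rightarrow> bool" where
  "int_adj s t \<longleftrightarrow> \<bar>s - t\<bar> \<le> 1"

definition NP_homotopic :: "nat \<Rightarrow> 'a set \<Rightarrow> ('a \<Rightarrow> 'a \<Rightarrow> bool) \<Rightarrow> 'b set \<Rightarrow> ('b \<Rightarrow> 'b \<Rightarrow> bool)
    \<Rightarrow> ('a \<Rightarrow> 'b) \<Rightarrow> ('a \<Rightarrow> 'b) \<Rightarrow> bool" where
  "NP_homotopic i X a Y b f g \<longleftrightarrow> (\<exists>m::int. m \<ge> 0 \<and> (\<exists>H.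
      dcontinuous (X \<times> {0..m}) (NP_adj i a int_adj) Y b H
      \<and> (\<forall>x\<in>X. H (x, 0) = f x) \<and> (\<forall>x\<in>X. H (x, m) = g x)))"

definition NP_H_space :: "nat \<Rightarrow> 'a set \<Rightarrow> ('a \<Rightarrow> 'a \<Rightarrow> bool) \<Rightarrow> 'a \<Rightarrow> ('a \<times> 'a \<Rightarrow> 'a) \<Rightarrow> bool" where
  "NP_H_space i X a e \<mu> \<longleftrightarrow> digital_image X a \<and> e \<in> X
     \<and> dcontinuous (X \<times> X) (NP_adj i a a) X a \<mu>
     \<and> NP_homotopic i X a X a (\<lambda>x. \<mu> (x, e)) id
     \<and> NP_homotopic i X a X a (\<lambda>x. \<mu> (e, x)) id"

definition H_equivalent_via :: "nat \<Rightarrow> 'a set \<Rightarrow> ('a \<Rightarrow> 'a \<Rightarrow> bool) \<Rightarrow> 'a \<Rightarrow> ('a \<times> 'a \<Rightarrow> 'a)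
    \<Rightarrow> 'b set \<Rightarrow> ('b \<Rightarrow> 'b \<Rightarrow> bool) \<Rightarrow> 'b \<Rightarrow> ('b \<times> 'b \<Rightarrow> 'b)
    \<Rightarrow> ('a \<Rightarrow> 'b) \<Rightarrow> ('b \<Rightarrow> 'a) \<Rightarrow> bool" where
  "H_equivalent_via i X a eX \<mu>X Y b eY \<mu>Y f g \<longleftrightarrow>
     dcontinuous X a Y b f \<and> f eX = eY \<and> dcontinuous Y b X a g \<and> g eY = eX
     \<and> NP_homotopic i Y b Y b (f \<circ> g) id \<and> NP_homotopic i X a X a (g \<circ> f) id
     \<and> NP_homotopic i (X \<times> X) (NP_adj i a a) Y b (f \<circ> \<mu>X) (\<mu>Y \<circ> map_prod f f)
     \<and> NP_homotopic i (Y \<times> Y) (NP_adj i b b) X a (g \<circ> \<mu>Y) (\<mu>X \<circ> map_prod g g)"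

end

theory Submission
  imports Defs
begin

lemma cont_comp:
  "dcontinuous X a Y b f \<Longrightarrow> dcontinuous Y b Z c g \<Longrightarrow> dcontinuous X a Z c (g \<circ> f)"
  by (auto simp: dcontinuous_def)

lemma cont_map_prod:
  assumes "dcontinuous X a X' a' f" "dcontinuous Y b Y' b' g"
  shows "dcontinuous (X \<times> Y) (NP_adj i a b) (X' \<times> Y') (NP_adj i a' b') (map_prod f g)"
  using assms unfolding dcontinuous_def NP_adj_def
  by (auto split: if_splits)

lemma cont_id: "dcontinuous X a X a id"
  by (auto simp: dcontinuous_def)

lemma hom_cong:
  assumes "NP_homotopic i X a Y b p q" "\<And>x. x \<in> X \<Longrightarrow> p x = p' x" "\<And>x. x \<in> X \<Longrightarrow> q x = q' x"
  shows "NP_homotopic i X a Y b p' q'"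
  using assms unfolding NP_homotopic_def by metis

lemma hom_comp:
  assumes "NP_homotopic i X a Y b p q" "dcontinuous W c X a \<phi>" "dcontinuous Y b Z d \<psi>"
  shows "NP_homotopic i W c Z d (\<psi> \<circ> p \<circ> \<phi>) (\<psi> \<circ> q \<circ> \<phi>)"
proof -
  from assms(1) obtain m H where m: "m \<ge> 0" and H: "dcontinuous (X \<times> {0..m}) (NP_adj i a int_adj) Y b H"
    "\<forall>x\<in>X. H (x, 0) = p x" "\<forall>x\<in>X. H (x, m) = q x"
    unfolding NP_homotopic_def by blast
  have "dcontinuous (W \<times> {0..m}) (NP_adj i c int_adj) (X \<times> {0..m}) (NP_adj i a int_adj) (map_prod \<phi> id)"
    by (rule cont_map_prod[OF assms(2) cont_id])
  then have "dcontinuous (W \<times> {0..m}) (NP_adj i c int_adj) Z d (\<psi> \<circ> H \<circ> map_prod \<phi> id)"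
    using cont_comp[OF cont_comp[OF _ H(1)] assms(3)] by (simp add: comp_assoc)
  moreover have "\<forall>x\<in>W. (\<psi> \<circ> H \<circ> map_prod \<phi> id) (x, 0) = (\<psi> \<circ> p \<circ> \<phi>) x"
    "\<forall>x\<in>W. (\<psi> \<circ> H \<circ> map_prod \<phi> id) (x, m) = (\<psi> \<circ> q \<circ> \<phi>) x"
    using H assms(2) by (auto simp: dcontinuous_def)
  ultimately show ?thesis unfolding NP_homotopic_def using m by blast
qed

lemma hom_sym:
  assumes "NP_homotopic i X a Y b p q"
  shows "NP_homotopic i X a Y b q p"
proof -
  from assms obtain m H where m: "m \<ge> 0" and H: "dcontinuous (X \<times> {0..m}) (NP_adj i a int_adj) Y b H"
    "\<forall>x\<in>X. H (x, 0) = p x" "\<forall>x\<in>X. H (x, m) = q x"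
    unfolding NP_homotopic_def by blast
  have r: "dcontinuous {0..m} int_adj {0..m} int_adj (\<lambda>t. m - t)"
    by (auto simp: dcontinuous_def int_adj_def)
  have "dcontinuous (X \<times> {0..m}) (NP_adj i a int_adj) Y b (H \<circ> map_prod id (\<lambda>t. m - t))"
    using cont_comp[OF cont_map_prod[OF cont_id r] H(1)] .
  moreover have "\<forall>x\<in>X. (H \<circ> map_prod id (\<lambda>t. m - t)) (x, 0) = q x"
     "\<forall>x\<in>X. (H \<circ> map_prod id (\<lambda>t. m - t)) (x, m) = p x" using H by auto
  ultimately show ?thesis unfolding NP_homotopic_def using m by blast
qed

lemma hom_trans:
  assumes "NP_homotopic i X a Y b p q" "NP_homotopic i X a Y b q r"
  shows "NP_homotopic i X a Y b p r"
proof -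
  from assms(1) obtain m1 H1 where m1: "m1 \<ge> 0" and H1: "dcontinuous (X \<times> {0..m1}) (NP_adj i a int_adj) Y b H1"
    "\<forall>x\<in>X. H1 (x, 0) = p x" "\<forall>x\<in>X. H1 (x, m1) = q x"
    unfolding NP_homotopic_def by blast
  from assms(2) obtain m2 H2 where m2: "m2 \<ge> 0" and H2: "dcontinuous (X \<times> {0..m2}) (NP_adj i a int_adj) Y b H2"
    "\<forall>x\<in>X. H2 (x, 0) = q x" "\<forall>x\<in>X. H2 (x, m2) = r x"
    unfolding NP_homotopic_def by blast
  define H where "H = (\<lambda>(x,t). if t \<le> m1 then H1 (x,t) else H2 (x, t - m1))"
  have H2eq: "H (x,t) = H2 (x, t - m1)" if "x \<in> X" "t \<ge> m1" for x t
    using that H1(3) H2(2) by (auto simp: H_def)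
  have H1eq: "H (x,t) = H1 (x, t)" if "t \<le> m1" for x t
    using that by (auto simp: H_def)
  have "dcontinuous (X \<times> {0..m1+m2}) (NP_adj i a int_adj) Y b H"
    unfolding dcontinuous_def
  proof (intro conjI ballI impI)
    fix z assume z: "z \<in> X \<times> {0..m1+m2}"
    then obtain x t where zz: "z = (x,t)" "x \<in> X" "0 \<le> t" "t \<le> m1+m2" by auto
    show "H z \<in> Y"
    proof (cases "t \<le> m1")
      case True then show ?thesis using H1(1) zz H1eq unfolding dcontinuous_def by auto
    next
      case False then show ?thesis using H2(1) zz H2eq[of x t] unfolding dcontinuous_def by auto
    qed
  next
    fix z z' assume z: "z \<in> X \<times> {0..m1+m2}" and z': "z' \<in> X \<times> {0..m1+m2}"
      and adj: "NP_adj i a int_adj z z'"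
    obtain x t where zz: "z = (x,t)" "x \<in> X" "0 \<le> t" "t \<le> m1+m2" using z by auto
    obtain y s where zz': "z' = (y,s)" "y \<in> X" "0 \<le> s" "s \<le> m1+m2" using z' by auto
    have ts: "\<bar>t - s\<bar> \<le> 1" using adj zz zz' by (auto simp: NP_adj_def int_adj_def)
    show "b (H z) (H z')"
    proof (cases "t \<le> m1 \<and> s \<le> m1")
      case True then show ?thesis using H1(1) zz zz' H1eq adj unfolding dcontinuous_def by auto
    next
      case False
      then have "t \<ge> m1" "s \<ge> m1" using ts by auto
      moreover have "NP_adj i a int_adj (x, t - m1) (y, s - m1)"
        using adj zz zz' by (auto simp: NP_adj_def int_adj_def)
      ultimately show ?thesis using H2(1) zz zz' H2eq unfolding dcontinuous_def by auto
    qed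
  qed
  moreover have "\<forall>x\<in>X. H (x, 0) = p x" using H1 m1 by (auto simp: H_def)
  moreover have "\<forall>x\<in>X. H (x, m1+m2) = r x" using H2eq H2(3) m2 by auto
  ultimately show ?thesis unfolding NP_homotopic_def using m1 m2
    by (metis add_nonneg_nonneg)
qed


lemma hom_first:
  assumes i: "i \<in> {1,2}" and mu: "dcontinuous (X \<times> X) (NP_adj i a a) X a \<mu>"
    and K: "NP_homotopic i X a X a p p'" and q: "dcontinuous X a X a q"
  shows "NP_homotopic i (X \<times> X) (NP_adj i a a) X a (\<lambda>z. \<mu> (p (fst z), q (snd z))) (\<lambda>z. \<mu> (p' (fst z), q (snd z)))"
proof -
  from K obtain m H where m: "m \<ge> 0" and H: "dcontinuous (X \<times> {0..m}) (NP_adj i a int_adj) X a H"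
    "\<forall>x\<in>X. H (x, 0) = p x" "\<forall>x\<in>X. H (x, m) = p' x"
    unfolding NP_homotopic_def by blast
  define G where "G = (\<lambda>((x::'a, x'::'a), t::int). (H (x,t), q x'))"
  have G: "dcontinuous ((X \<times> X) \<times> {0..m}) (NP_adj i (NP_adj i a a) int_adj) (X \<times> X) (NP_adj i a a) G"
    unfolding dcontinuous_def
  proof (intro conjI ballI impI)
    fix z assume "z \<in> (X \<times> X) \<times> {0..m}"
    then show "G z \<in> X \<times> X" using H(1) q unfolding dcontinuous_def G_def by auto
  next
    fix z z' assume z: "z \<in> (X \<times> X) \<times> {0..m}" and z': "z' \<in> (X \<times> X) \<times> {0..m}"
      and adj: "NP_adj i (NP_adj i a a) int_adj z z'"
    obtain x x' t where zz: "z = ((x,x'),t)" "x \<in> X" "x' \<in> X" "t \<in> {0..m}" using z by auto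
    obtain y y' s where zz': "z' = ((y,y'),s)" "y \<in> X" "y' \<in> X" "s \<in> {0..m}" using z' by auto
    have A: "NP_adj i a int_adj (x,t) (y,s)" using adj zz zz' i
      by (auto simp: NP_adj_def split: if_splits)
    have B: "x' = y' \<or> a x' y'" using adj zz zz' i
      by (auto simp: NP_adj_def split: if_splits)
    have C1: "H (x,t) = H (y,s) \<or> a (H (x,t)) (H (y,s))"
      using A H(1) zz zz' unfolding dcontinuous_def by auto
    have C2: "q x' = q y' \<or> a (q x') (q y')"
      using B q zz zz' unfolding dcontinuous_def by auto
    have C3: "(if H (x,t) = H (y,s) then 0 else 1) + (if q x' = q y' then 0 else 1) \<le> i"
    proof (cases "i = 2")
      case True then show ?thesis by auto
    next
      case False
      then have i1: "i = 1" using i by auto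
      have "(x = y \<and> t = s) \<or> x' = y'" using adj zz zz' i1
        by (auto simp: NP_adj_def split: if_splits)
      then show ?thesis using i1 by auto
    qed
    show "NP_adj i a a (G z) (G z')" using C1 C2 C3 zz zz' unfolding NP_adj_def G_def by auto
  qed
  have "dcontinuous ((X \<times> X) \<times> {0..m}) (NP_adj i (NP_adj i a a) int_adj) X a (\<mu> \<circ> G)"
    using cont_comp[OF G mu] .
  moreover have "\<forall>z\<in>X \<times> X. (\<mu> \<circ> G) (z, 0) = \<mu> (p (fst z), q (snd z))"
    "\<forall>z\<in>X \<times> X. (\<mu> \<circ> G) (z, m) = \<mu> (p' (fst z), q (snd z))"
    using H by (auto simp: G_def)
  ultimately show ?thesis unfolding NP_homotopic_def using m by blast
qed

lemma hom_second:
  assumes i: "i \<in> {1,2}" and mu: "dcontinuous (X \<times> X) (NP_adj i a a) X a \<mu>"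
    and K: "NP_homotopic i X a X a p p'" and q: "dcontinuous X a X a q"
  shows "NP_homotopic i (X \<times> X) (NP_adj i a a) X a (\<lambda>z. \<mu> (q (fst z), p (snd z))) (\<lambda>z. \<mu> (q (fst z), p' (snd z)))"
proof -
  from K obtain m H where m: "m \<ge> 0" and H: "dcontinuous (X \<times> {0..m}) (NP_adj i a int_adj) X a H"
    "\<forall>x\<in>X. H (x, 0) = p x" "\<forall>x\<in>X. H (x, m) = p' x"
    unfolding NP_homotopic_def by blast
  define G where "G = (\<lambda>((x::'a, x'::'a), t::int). (q x, H (x',t)))"
  have G: "dcontinuous ((X \<times> X) \<times> {0..m}) (NP_adj i (NP_adj i a a) int_adj) (X \<times> X) (NP_adj i a a) G"
    unfolding dcontinuous_def
  proof (intro conjI ballI impI)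
    fix z assume "z \<in> (X \<times> X) \<times> {0..m}"
    then show "G z \<in> X \<times> X" using H(1) q unfolding dcontinuous_def G_def by auto
  next
    fix z z' assume z: "z \<in> (X \<times> X) \<times> {0..m}" and z': "z' \<in> (X \<times> X) \<times> {0..m}"
      and adj: "NP_adj i (NP_adj i a a) int_adj z z'"
    obtain x x' t where zz: "z = ((x,x'),t)" "x \<in> X" "x' \<in> X" "t \<in> {0..m}" using z by auto
    obtain y y' s where zz': "z' = ((y,y'),s)" "y \<in> X" "y' \<in> X" "s \<in> {0..m}" using z' by auto
    have A: "NP_adj i a int_adj (x',t) (y',s)" using adj zz zz' i
      by (auto simp: NP_adj_def split: if_splits)
    have B: "x = y \<or> a x y" using adj zz zz' i
      by (auto simp: NP_adj_def split: if_splits)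
    have C1: "H (x',t) = H (y',s) \<or> a (H (x',t)) (H (y',s))"
      using A H(1) zz zz' unfolding dcontinuous_def by auto
    have C2: "q x = q y \<or> a (q x) (q y)"
      using B q zz zz' unfolding dcontinuous_def by auto
    have C3: "(if q x = q y then 0 else 1) + (if H (x',t) = H (y',s) then 0 else 1) \<le> i"
    proof (cases "i = 2")
      case True then show ?thesis by auto
    next
      case False
      then have i1: "i = 1" using i by auto
      have "(x' = y' \<and> t = s) \<or> x = y" using adj zz zz' i1
        by (auto simp: NP_adj_def split: if_splits)
      then show ?thesis using i1 by auto
    qed
    show "NP_adj i a a (G z) (G z')" using C1 C2 C3 zz zz' unfolding NP_adj_def G_def by auto
  qed
  have "dcontinuous ((X \<times> X) \<times> {0..m}) (NP_adj i (NP_adj i a a) int_adj) X a (\<mu> \<circ> G)"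
    using cont_comp[OF G mu] .
  moreover have "\<forall>z\<in>X \<times> X. (\<mu> \<circ> G) (z, 0) = \<mu> (q (fst z), p (snd z))"
    "\<forall>z\<in>X \<times> X. (\<mu> \<circ> G) (z, m) = \<mu> (q (fst z), p' (snd z))"
    using H by (auto simp: G_def)
  ultimately show ?thesis unfolding NP_homotopic_def using m by blast
qed


theorem mainTheorem3:
  fixes X :: "'a set" and a :: "'a \<Rightarrow> 'a \<Rightarrow> bool" and eX :: 'a and \<mu>X :: "'a \<times> 'a \<Rightarrow> 'a"
    and Y :: "'b set" and b :: "'b \<Rightarrow> 'b \<Rightarrow> bool" and eY :: 'b
    and f :: "'a \<Rightarrow> 'b" and g :: "'b \<Rightarrow> 'a" and i :: nat
  assumes "i \<in> {1, 2}"
    and "NP_H_space i X a eX \<mu>X"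
    and "digital_image Y b" and "eY \<in> Y"
    and "dcontinuous X a Y b f" and "f eX = eY"
    and "dcontinuous Y b X a g" and "g eY = eX"
    and "NP_homotopic i X a X a (g \<circ> f) id"
    and "NP_homotopic i Y b Y b (f \<circ> g) id"
  shows "NP_H_space i Y b eY (f \<circ> \<mu>X \<circ> map_prod g g)
       \<and> H_equivalent_via i X a eX \<mu>X Y b eY (f \<circ> \<mu>X \<circ> map_prod g g) f g"
proof -
  note i = assms(1) and f = assms(5) and g = assms(7) and gf = assms(9) and fg = assms(10)
  have muc: "dcontinuous (X \<times> X) (NP_adj i a a) X a \<mu>X"
    and h1: "NP_homotopic i X a X a (\<lambda>x. \<mu>X (x, eX)) id"
    and h2: "NP_homotopic i X a X a (\<lambda>x. \<mu>X (eX, x)) id"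
    using assms(2) unfolding NP_H_space_def by auto
  have gg: "dcontinuous (Y \<times> Y) (NP_adj i b b) (X \<times> X) (NP_adj i a a) (map_prod g g)"
    by (rule cont_map_prod[OF g g])
  have muY: "dcontinuous (Y \<times> Y) (NP_adj i b b) Y b (f \<circ> \<mu>X \<circ> map_prod g g)"
    using cont_comp[OF gg cont_comp[OF muc f]] by (simp add: comp_assoc)
  have y1: "NP_homotopic i Y b Y b (\<lambda>y. (f \<circ> \<mu>X \<circ> map_prod g g) (y, eY)) id"
    apply (rule hom_trans[OF _ fg])
    apply (rule hom_cong[OF hom_comp[OF h1 g f]])
    using assms(8) by auto
  have y2: "NP_homotopic i Y b Y b (\<lambda>y. (f \<circ> \<mu>X \<circ> map_prod g g) (eY, y)) id"
    apply (rule hom_trans[OF _ fg])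
    apply (rule hom_cong[OF hom_comp[OF h2 g f]])
    using assms(8) by auto
  have gfc: "dcontinuous X a X a (g \<circ> f)" by (rule cont_comp[OF f g])
  have s1: "NP_homotopic i (X \<times> X) (NP_adj i a a) X a (\<lambda>z. \<mu>X ((g \<circ> f) (fst z), (g \<circ> f) (snd z)))
      (\<lambda>z. \<mu>X (id (fst z), (g \<circ> f) (snd z)))"
    by (rule hom_first[OF i muc gf gfc])
  have s2: "NP_homotopic i (X \<times> X) (NP_adj i a a) X a (\<lambda>z. \<mu>X (id (fst z), (g \<circ> f) (snd z)))
      (\<lambda>z. \<mu>X (id (fst z), id (snd z)))"
    by (rule hom_second[OF i muc gf cont_id])
  have s: "NP_homotopic i (X \<times> X) (NP_adj i a a) X a \<mu>X (\<lambda>z. \<mu>X ((g \<circ> f) (fst z), (g \<circ> f) (snd z)))"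
    apply (rule hom_sym)
    apply (rule hom_cong[OF hom_trans[OF s1 s2]])
    by auto
  have c: "NP_homotopic i (X \<times> X) (NP_adj i a a) Y b (f \<circ> \<mu>X) ((f \<circ> \<mu>X \<circ> map_prod g g) \<circ> map_prod f f)"
    apply (rule hom_cong[OF hom_comp[OF s cont_id f]])
    by auto
  have muXgg: "dcontinuous (Y \<times> Y) (NP_adj i b b) X a (\<mu>X \<circ> map_prod g g)"
    by (rule cont_comp[OF gg muc])
  have d: "NP_homotopic i (Y \<times> Y) (NP_adj i b b) X a (g \<circ> (f \<circ> \<mu>X \<circ> map_prod g g)) (\<mu>X \<circ> map_prod g g)"
    apply (rule hom_cong[OF hom_comp[OF gf muXgg cont_id]])
    by auto
  show ?thesis
    unfolding NP_H_space_def H_equivalent_via_def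
    using assms muY y1 y2 c d by auto
qed

end
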